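(* Let $\ell\ge1$, $0<\delta\le1/2$, $\alpha\in\mathbb T$, $R=\{n\in\mathbb N:\|n^\ell\alpha\|>\delta\}$, and $m=\lceil 2^{\ell-1}\delta^{-1}\rceil$. Then $R$ is not $m$-large.
   Context: $\|t\|$ is the distance to the nearest integer. For $m\ge2$, $R\subset\mathbb N$ is $m$-large if every coloring of $\mathbb N$ with $m$ colors contains arbitrarily long monochromatic arithmetic progressions with common difference in $R$. *)

theory Defs
  imports Complex_Main
begin

definition dist_nint :: "real \<Rightarrow> real" where
  "dist_nint t = \<bar>t - of_int (round t)\<bar>"

text \<open>Here the natural numbers are the positive integers.\<close>
definition m_large :: "nat \<Rightarrow> nat set \<Rightarrow> bool" where
  "m_large m R \<longleftrightarrow>
     (\<forall>c :: nat \<Rightarrow> nat. (\<forall>n\<ge>1. c n < m) \<longrightarrow>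
        (\<forall>k. \<exists>a d. a \<ge> 1 \<and> d \<in> R \<and> (\<forall>i<k. c (a + i * d) = c a)))"

end

theory Submission
  imports Defs
begin

fun fdiff :: "nat \<Rightarrow> (nat \<Rightarrow> real) \<Rightarrow> nat \<Rightarrow> real" where
  "fdiff 0 h = h"
| "fdiff (Suc n) h = fdiff n (\<lambda>j. h (Suc j) - h j)"

lemma fdiff_sum:
  "fdiff n (\<lambda>j. \<Sum>i\<in>S. f i j) x = (\<Sum>i\<in>S. fdiff n (f i) x)"
proof (induction n arbitrary: f)
  case 0 then show ?case by simp
next
  case (Suc n)
  have "fdiff (Suc n) (\<lambda>j. \<Sum>i\<in>S. f i j) x
      = fdiff n (\<lambda>j. \<Sum>i\<in>S. f i (Suc j) - f i j) x"
    by (simp add: sum_subtractf)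
  also have "\<dots> = (\<Sum>i\<in>S. fdiff n (\<lambda>j. f i (Suc j) - f i j) x)"
    using Suc.IH[of "\<lambda>i j. f i (Suc j) - f i j"] by simp
  finally show ?case by simp
qed

lemma fdiff_cmult: "fdiff n (\<lambda>j. c * f j) x = c * fdiff n f x"
proof (induction n arbitrary: f)
  case 0 then show ?case by simp
next
  case (Suc n)
  show ?case using Suc.IH[of "\<lambda>j. f (Suc j) - f j"]
    by (simp add: right_diff_distrib)
qed

lemma fdiff_add: "fdiff n (\<lambda>j. f j + g j) x = fdiff n f x + fdiff n g x"
proof (induction n arbitrary: f g)
  case 0 then show ?case by simp
next
  case (Suc n)
  show ?case using Suc.IH[of "\<lambda>j. f (Suc j) - f j" "\<lambda>j. g (Suc j) - g j"]
    by (simp add: algebra_simps)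
qed

lemma fdiff_int: "fdiff n (\<lambda>j. of_int (z j)) x \<in> \<int>"
proof (induction n arbitrary: z)
  case 0 then show ?case by simp
next
  case (Suc n)
  show ?case using Suc.IH[of "\<lambda>j. z (Suc j) - z j"] by simp
qed

lemma fdiff_bound:
  assumes "n \<ge> 1" "\<And>j. j \<le> n \<Longrightarrow> u \<le> h j \<and> h j \<le> u + L"
  shows "\<bar>fdiff n h 0\<bar> \<le> 2 ^ (n - 1) * L"
  using assms
proof (induction n arbitrary: h u L)
  case 0 then show ?case by simp
next
  case (Suc n)
  show ?case
  proof (cases "n = 0")
    case True
    then show ?thesis using Suc.prems(2)[of 0] Suc.prems(2)[of 1] by auto
  next
    case False
    have "\<bar>fdiff n (\<lambda>j. h (Suc j) - h j) 0\<bar> \<le> 2 ^ (n - 1) * (2 * L)"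
    proof (rule Suc.IH[where u="-L"])
      show "1 \<le> n" using False by simp
      fix j assume j: "j \<le> n"
      have "u \<le> h (Suc j) \<and> h (Suc j) \<le> u + L" using j Suc.prems(2)[of "Suc j"] by simp
      moreover have "u \<le> h j \<and> h j \<le> u + L" using j Suc.prems(2)[of j] by simp
      ultimately show "- L \<le> h (Suc j) - h j \<and> h (Suc j) - h j \<le> - L + 2 * L" by linarith
    qed
    moreover have "(2::real) ^ (Suc n - 1) = 2 ^ (n - 1) * 2" using False by (cases n) auto
    ultimately show ?thesis by (simp add: mult.assoc)
  qed
qed

lemma pow_shift: "(real j + 1) ^ k - real j ^ k = (\<Sum>i<k. real (k choose i) * real j ^ i)"
proof -
  have "(real j + 1) ^ k = (\<Sum>i\<le>k. real (k choose i) * real j ^ i)"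
    using binomial_ring[of "real j" 1 k] by simp
  also have "\<dots> = (\<Sum>i<k. real (k choose i) * real j ^ i) + real j ^ k"
    by (simp add: lessThan_Suc_atMost[symmetric])
  finally show ?thesis by simp
qed

lemma fdiff_mono:
  "k \<le> n \<Longrightarrow> fdiff n (\<lambda>j. real j ^ k) x = (if k = n then fact n else 0)"
proof (induction n arbitrary: k x)
  case 0 then show ?case by simp
next
  case (Suc n)
  have "fdiff (Suc n) (\<lambda>j. real j ^ k) x
       = fdiff n (\<lambda>j. \<Sum>i<k. real (k choose i) * real j ^ i) x"
    using pow_shift by (simp add: add.commute)
  also have "\<dots> = (\<Sum>i<k. real (k choose i) * fdiff n (\<lambda>j. real j ^ i) x)"
    by (simp add: fdiff_sum fdiff_cmult)
  also have "\<dots> = (\<Sum>i<k. if i = n then real (k choose i) * fact n else 0)"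
    by (rule sum.cong) (use Suc.prems in \<open>auto simp: Suc.IH\<close>)
  also have "\<dots> = (if k = Suc n then fact (Suc n) else 0)"
    using Suc.prems by (auto simp: sum.delta algebra_simps)
  finally show ?case by simp
qed

lemma fdiff_ap:
  "fdiff l (\<lambda>j. (a + real j * d) ^ l) x = fact l * d ^ l"
proof -
  have "fdiff l (\<lambda>j. (a + real j * d) ^ l) x
      = fdiff l (\<lambda>j. \<Sum>k\<le>l. (real (l choose k) * d ^ k * a ^ (l - k)) * real j ^ k) x"
  proof -
    have "\<And>j. (a + real j * d) ^ l = (\<Sum>k\<le>l. (real (l choose k) * d ^ k * a ^ (l - k)) * real j ^ k)"
    proof -
      fix j
      have "(a + real j * d) ^ l = (real j * d + a) ^ l" by (simp add: add.commute)
      also have "\<dots> = (\<Sum>k\<le>l. real (l choose k) * (real j * d) ^ k * a ^ (l - k))"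
        by (rule binomial_ring)
      finally show "(a + real j * d) ^ l = (\<Sum>k\<le>l. (real (l choose k) * d ^ k * a ^ (l - k)) * real j ^ k)"
        by (simp add: power_mult_distrib algebra_simps)
    qed
    then show ?thesis by simp
  qed
  also have "\<dots> = (\<Sum>k\<le>l. (real (l choose k) * d ^ k * a ^ (l - k)) * fdiff l (\<lambda>j. real j ^ k) x)"
    by (simp add: fdiff_sum fdiff_cmult)
  also have "\<dots> = (\<Sum>k\<le>l. if k = l then (real (l choose k) * d ^ k * a ^ (l - k)) * fact l else 0)"
    by (rule sum.cong) (auto simp: fdiff_mono)
  also have "\<dots> = fact l * d ^ l" by (simp add: sum.delta)
  finally show ?thesis .
qed


lemma dist_nint_le: "dist_nint t \<le> \<bar>t - of_int z\<bar>"
proof -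
  have r1: "t - 1/2 < of_int (round t)" and r2: "of_int (round t) \<le> t + 1/2"
    using of_int_round_gt[of t] of_int_round_le[of t] by auto
  consider "z \<le> round t - 1" | "z = round t" | "z \<ge> round t + 1" by linarith
  then show ?thesis
  proof cases
    case 1
    then have "real_of_int z \<le> of_int (round t) - 1" by linarith
    then show ?thesis unfolding dist_nint_def using r1 r2 by linarith
  next
    case 2 then show ?thesis unfolding dist_nint_def by simp
  next
    case 3
    then have "real_of_int z \<ge> of_int (round t) + 1" by linarith
    then show ?thesis unfolding dist_nint_def using r1 r2 by linarith
  qed
qed

theorem mainTheorem19:
  fixes l :: nat and \<delta> \<alpha> :: real
  assumes "l \<ge> 1" and "0 < \<delta>" and "\<delta> \<le> 1/2"
  shows "\<not> m_large (nat \<lceil>2 ^ (l - 1) / \<delta>\<rceil>)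
                 {n :: nat. n \<ge> 1 \<and> dist_nint (real n ^ l * \<alpha>) > \<delta>}"
proof
  define M where "M = nat \<lceil>2 ^ (l - 1) / \<delta>\<rceil>"
  define R where "R = {n :: nat. n \<ge> 1 \<and> dist_nint (real n ^ l * \<alpha>) > \<delta>}"
  define \<beta> where "\<beta> = \<alpha> / fact l"
  define c where "c n = nat \<lfloor>real M * frac (real n ^ l * \<beta>)\<rfloor>" for n :: nat
  assume "m_large (nat \<lceil>2 ^ (l - 1) / \<delta>\<rceil>) {n :: nat. n \<ge> 1 \<and> dist_nint (real n ^ l * \<alpha>) > \<delta>}"
  then have H: "m_large M R" unfolding M_def R_def .
  have pos: "2 ^ (l - 1) / \<delta> > 0" using assms by simp
  have Mge: "real M \<ge> 2 ^ (l - 1) / \<delta>"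
  proof -
    have "0 \<le> \<lceil>2 ^ (l - 1) / \<delta>\<rceil>" using pos by simp
    then have "real M = of_int \<lceil>2 ^ (l - 1) / \<delta>\<rceil>" unfolding M_def by simp
    then show ?thesis using le_of_int_ceiling[of "2 ^ (l - 1) / \<delta>"] by linarith
  qed
  then have Mpos: "real M > 0" using pos by linarith
  have Mle: "2 ^ (l - 1) / real M \<le> \<delta>"
    using Mge Mpos assms(2) by (simp add: field_simps)
  have cM: "\<forall>n\<ge>1. c n < M"
  proof (intro allI impI)
    fix n :: nat
    have "frac (real n ^ l * \<beta>) < 1" by (rule frac_lt_1)
    then have "real M * frac (real n ^ l * \<beta>) < real M" using Mpos by simp
    then have "\<lfloor>real M * frac (real n ^ l * \<beta>)\<rfloor> < int M"
      by (simp add: floor_less_iff)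
    then show "c n < M" unfolding c_def using Mpos by simp
  qed
  from H cM obtain a d where ad: "a \<ge> 1" "d \<in> R" "\<forall>i<Suc l. c (a + i * d) = c a"
    unfolding m_large_def by blast
  define x where "x j = real (a + j * d) ^ l * \<beta>" for j :: nat
  define t where "t = c a"
  have bnd: "real t / real M \<le> frac (x j) \<and> frac (x j) \<le> real t / real M + 1 / real M"
    if "j \<le> l" for j
  proof -
    have ct: "c (a + j * d) = t" using ad(3) that unfolding t_def by auto
    have f0: "0 \<le> real M * frac (x j)" using Mpos frac_ge_0 by simp
    have "t = nat \<lfloor>real M * frac (x j)\<rfloor>" using ct unfolding c_def x_def by simp
    then have "real t = of_int \<lfloor>real M * frac (x j)\<rfloor>" using f0 by simp
    then have "real t \<le> real M * frac (x j) \<and> real M * frac (x j) < real t + 1"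
      using of_int_floor_le[of "real M * frac (x j)"] real_of_int_floor_add_one_gt[of "real M * frac (x j)"]
      by linarith
    then show ?thesis using Mpos by (simp add: field_simps)
  qed
  have fb: "\<bar>fdiff l (\<lambda>j. frac (x j)) 0\<bar> \<le> 2 ^ (l - 1) * (1 / real M)"
    by (rule fdiff_bound[where u="real t / real M"]) (use assms(1) bnd in auto)
  have fx: "fdiff l x 0 = real d ^ l * \<alpha>"
  proof -
    have "x = (\<lambda>j. \<beta> * (real a + real j * real d) ^ l)"
      unfolding x_def fun_eq_iff by (simp add: mult_ac)
    then have "fdiff l x 0 = \<beta> * (fact l * real d ^ l)"
      by (simp add: fdiff_cmult fdiff_ap)
    then show ?thesis unfolding \<beta>_def by simp
  qed
  have "fdiff l x 0 = fdiff l (\<lambda>j. of_int \<lfloor>x j\<rfloor>) 0 + fdiff l (\<lambda>j. frac (x j)) 0"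
    using fdiff_add[of l "\<lambda>j. of_int \<lfloor>x j\<rfloor>" "\<lambda>j. frac (x j)" 0] by (simp add: frac_def)
  moreover obtain z where "fdiff l (\<lambda>j. of_int \<lfloor>x j\<rfloor>) 0 = of_int z"
    using fdiff_int[of l "\<lambda>j. \<lfloor>x j\<rfloor>" 0] by (auto elim: Ints_cases)
  ultimately have "\<bar>real d ^ l * \<alpha> - of_int z\<bar> \<le> 2 ^ (l - 1) / real M"
    using fx fb by simp
  then have "dist_nint (real d ^ l * \<alpha>) \<le> \<delta>"
    using dist_nint_le[of "real d ^ l * \<alpha>" z] Mle by linarith
  then show False using ad(2) unfolding R_def by auto
qed

end
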